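(* Let $F/\mathbb{Q}_p$ be a finite extension with ring of integers $\mathcal{O}_F$, ramification degree $e$, and residue field of cardinality $q$. Let $\nu_F$ be the right Haar measure on $\mathrm{SL}_2(F)$ normalized by $\nu_F(\mathrm{SL}_2(\mathcal{O}_F)) = 1$. For $a \in \mathbb{Z}_p \setminus \{0\}$ let \[S_F(a) = \left\{ \begin{pmatrix} \alpha_{11} & \alpha_{12} \\ \alpha_{21} & \alpha_{22} \end{pmatrix} \in \mathrm{SL}_2(F) : \begin{pmatrix} a\alpha_{11} & \alpha_{12} \\ a\alpha_{21} & \alpha_{22} \end{pmatrix} \in \mathrm{M}_2(\mathcal{O}_F) \right\}.\] Then $\nu_F(S_F(a)) = \dfrac{1 - q^{e v_p(a) + 1}}{1 - q}$, where $v_p$ is the normalized $p$-adic valuation. *)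

theory Defs
  imports "HOL-Analysis.Analysis"
begin

text \<open>A field F (of characteristic 0, via the type class) with a normalized discrete
  valuation v (v x is meaningful only for x \<noteq> 0; v 0 is irrelevant).\<close>

definition vge :: "('a::field \<Rightarrow> int) \<Rightarrow> int \<Rightarrow> 'a \<Rightarrow> bool" where
  "vge v n x \<longleftrightarrow> x = 0 \<or> n \<le> v x"

definition discrete_valuation :: "('a::field \<Rightarrow> int) \<Rightarrow> bool" where
  "discrete_valuation v \<longleftrightarrow>
     (\<forall>x y. x \<noteq> 0 \<longrightarrow> y \<noteq> 0 \<longrightarrow> v (x * y) = v x + v y) \<and>
     (\<forall>x y. x \<noteq> 0 \<longrightarrow> y \<noteq> 0 \<longrightarrow> x + y \<noteq> 0 \<longrightarrow> min (v x) (v y) \<le> v (x + y)) \<and>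
     (\<exists>\<pi>. \<pi> \<noteq> 0 \<and> v \<pi> = 1)"

definition val_complete :: "('a::field \<Rightarrow> int) \<Rightarrow> bool" where
  "val_complete v \<longleftrightarrow>
     (\<forall>X :: nat \<Rightarrow> 'a. (\<forall>n. \<exists>N. \<forall>m\<ge>N. \<forall>k\<ge>N. vge v n (X m - X k)) \<longrightarrow>
        (\<exists>L. \<forall>n. \<exists>N. \<forall>m\<ge>N. vge v n (X m - L)))"

definition int_ring :: "('a::field \<Rightarrow> int) \<Rightarrow> 'a set" where
  "int_ring v = {x. vge v 0 x}"

definition residue_field :: "('a::field \<Rightarrow> int) \<Rightarrow> 'a set set" where
  "residue_field v = int_ring v //
     {(x, y). x \<in> int_ring v \<and> y \<in> int_ring v \<and> vge v 1 (x - y)}"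

definition residue_card :: "('a::field \<Rightarrow> int) \<Rightarrow> nat" where
  "residue_card v = card (residue_field v)"

text \<open>(F, v) is a finite extension of Q_p: a complete discretely valued field of
  characteristic 0 with finite residue field of characteristic p.\<close>
definition padic_local_field :: "('a::field_char_0 \<Rightarrow> int) \<Rightarrow> nat \<Rightarrow> bool" where
  "padic_local_field v p \<longleftrightarrow> prime p \<and> discrete_valuation v \<and> val_complete v \<and>
     finite (residue_field v) \<and> vge v 1 (of_nat p)"

definition ram_index :: "('a::field_char_0 \<Rightarrow> int) \<Rightarrow> nat \<Rightarrow> nat" where
  "ram_index v p = nat (v (of_nat p))"

text \<open>Z_p inside F: the closure of the image of Z.\<close>
definition Zp_in :: "('a::field_char_0 \<Rightarrow> int) \<Rightarrow> nat \<Rightarrow> 'a set" where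
  "Zp_in v p = {x. \<forall>n. \<exists>m::int. vge v n (x - of_int m)}"

definition vp :: "('a::field_char_0 \<Rightarrow> int) \<Rightarrow> nat \<Rightarrow> 'a \<Rightarrow> nat" where
  "vp v p a = (GREATEST k::nat. a / of_nat p ^ k \<in> Zp_in v p)"

definition SL2 :: "('a::field ^ 2 ^ 2) set" where
  "SL2 = {A. det A = 1}"

definition SL2_int :: "('a::field \<Rightarrow> int) \<Rightarrow> ('a ^ 2 ^ 2) set" where
  "SL2_int v = {A \<in> SL2. \<forall>i j. vge v 0 (A $ i $ j)}"

definition mat_topology :: "('a::field \<Rightarrow> int) \<Rightarrow> ('a ^ 2 ^ 2) topology" where
  "mat_topology v = topology_generated_by
     {{B. \<forall>i j. vge v n (B $ i $ j - A $ i $ j)} | A n. True}"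

definition SL2_borel :: "('a::field \<Rightarrow> int) \<Rightarrow> ('a ^ 2 ^ 2) set set" where
  "SL2_borel v = sigma_sets SL2 {SL2 \<inter> U | U. openin (mat_topology v) U}"

definition normalized_right_haar :: "('a::field \<Rightarrow> int) \<Rightarrow> ('a ^ 2 ^ 2) measure \<Rightarrow> bool" where
  "normalized_right_haar v M \<longleftrightarrow>
     space M = SL2 \<and> sets M = SL2_borel v \<and>
     (\<forall>A\<in>sets M. \<forall>g\<in>SL2. emeasure M ((\<lambda>x. x ** g) ` A) = emeasure M A) \<and>
     (\<forall>C. compactin (subtopology (mat_topology v) SL2) C \<longrightarrow> emeasure M C < \<infinity>) \<and>
     emeasure M (SL2_int v) = 1"

definition S_F :: "('a::field \<Rightarrow> int) \<Rightarrow> 'a \<Rightarrow> ('a ^ 2 ^ 2) set" where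
  "S_F v a = {A \<in> SL2. vge v 0 (a * A $ 1 $ 1) \<and> vge v 0 (A $ 1 $ 2) \<and>
                        vge v 0 (a * A $ 2 $ 1) \<and> vge v 0 (A $ 2 $ 2)}"

end

theory Submission
  imports Defs
begin

context
  fixes v :: "'a::field \<Rightarrow> int"
  assumes dv: "discrete_valuation v"
begin

lemma vmult: "x \<noteq> 0 \<Longrightarrow> y \<noteq> 0 \<Longrightarrow> v (x * y) = v x + v y"
  using dv unfolding discrete_valuation_def by blast

lemma vadd: "x \<noteq> 0 \<Longrightarrow> y \<noteq> 0 \<Longrightarrow> x + y \<noteq> 0 \<Longrightarrow> min (v x) (v y) \<le> v (x + y)"
  using dv unfolding discrete_valuation_def by blast

lemma v1: "v 1 = 0"
  using vmult[of 1 1] by simp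

lemma vinv: "x \<noteq> 0 \<Longrightarrow> v (inverse x) = - v x"
  using vmult[of x "inverse x"] by (simp add: v1)

lemma vdiv: "x \<noteq> 0 \<Longrightarrow> y \<noteq> 0 \<Longrightarrow> v (x / y) = v x - v y"
  by (simp add: divide_inverse vmult vinv)

lemma vm1: "v (-1) = 0"
  using vmult[of "-1" "-1"] by (simp add: v1)

lemma vneg: "v (- x) = v x"
proof (cases "x = 0")
  case True then show ?thesis by simp
next
  case False then show ?thesis using vmult[of "-1" x] by (simp add: vm1)
qed

lemma vpow: "x \<noteq> 0 \<Longrightarrow> v (x ^ n) = int n * v x"
  by (induction n) (auto simp: v1 vmult algebra_simps)

lemma vge_add: "vge v n x \<Longrightarrow> vge v n y \<Longrightarrow> vge v n (x + y)"
  unfolding vge_def using vadd[of x y] by fastforce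

lemma vge_neg: "vge v n (- x) = vge v n x"
  unfolding vge_def by (simp add: vneg)

lemma vge_diff: "vge v n x \<Longrightarrow> vge v n y \<Longrightarrow> vge v n (x - y)"
  using vge_add[of n x "- y"] by (simp add: vge_neg)

lemma vge_mult: "vge v i x \<Longrightarrow> vge v j y \<Longrightarrow> n \<le> i + j \<Longrightarrow> vge v n (x * y)"
proof -
  assume h: "vge v i x" "vge v j y" "n \<le> i + j"
  show ?thesis
  proof (cases "x = 0 \<or> y = 0")
    case False
    then show ?thesis using h by (auto simp: vmult vge_def)
  qed (auto simp: vge_def)
qed

lemma vge_mono: "vge v n x \<Longrightarrow> m \<le> n \<Longrightarrow> vge v m x"
  unfolding vge_def by auto

lemma vge_0: "vge v n 0" by (simp add: vge_def)
lemma vge_1: "vge v 0 1" by (simp add: vge_def v1)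

lemma vge_int: "vge v 0 (of_int m)"
proof (induction m rule: int_induct[where k=0])
  case base then show ?case by (simp add: vge_0)
next
  case (step1 i) then show ?case using vge_add[OF _ vge_1] by simp
next
  case (step2 i) then show ?case using vge_diff[OF _ vge_1] by simp
qed

lemma vge_strict: "x \<noteq> 0 \<Longrightarrow> vge v (v x + 1) (y - x) \<Longrightarrow> y \<noteq> 0 \<and> v y = v x"
proof -
  assume x: "x \<noteq> 0" and h: "vge v (v x + 1) (y - x)"
  show ?thesis
  proof (cases "y = x")
    case True then show ?thesis using x by simp
  next
    case False
    then have d: "y - x \<noteq> 0" "v (y - x) \<ge> v x + 1" using h by (auto simp: vge_def)
    have y0: "y \<noteq> 0" using d by (auto simp: vneg)
    have "min (v x) (v (y - x)) \<le> v y" using vadd[of x "y - x"] x d y0 by simp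
    moreover have "min (v y) (v (-(y - x))) \<le> v x" using vadd[of y "-(y - x)"] x d y0 by simp
    moreover have "v (x - y) = v (y - x)" using vneg[of "y - x"] by simp
    ultimately show ?thesis using d y0 by (auto simp: vneg)
  qed
qed

end

definition rrel :: "('a::field \<Rightarrow> int) \<Rightarrow> ('a \<times> 'a) set" where
  "rrel v = {(x, y). x \<in> int_ring v \<and> y \<in> int_ring v \<and> vge v 1 (x - y)}"

definition reps :: "('a::field \<Rightarrow> int) \<Rightarrow> 'a set" where
  "reps v = (\<lambda>C. SOME x. x \<in> C) ` residue_field v"

fun Tk :: "'a::field \<Rightarrow> 'a set \<Rightarrow> nat \<Rightarrow> 'a set" where
  "Tk \<pi> R 0 = {0}"
| "Tk \<pi> R (Suc k) = (\<lambda>(t,r). t + \<pi>^k * r) ` (Tk \<pi> R k \<times> R)"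

context
  fixes v :: "'a::field \<Rightarrow> int"
  assumes dv: "discrete_valuation v"
begin

lemma rrel_equiv: "equiv (int_ring v) (rrel v)"
proof -
  have "refl_on (int_ring v) (rrel v)"
    unfolding refl_on_def rrel_def by (auto simp: vge_def)
  moreover have "sym (rrel v)"
  proof (rule symI)
    fix x y assume "(x, y) \<in> rrel v"
    then show "(y, x) \<in> rrel v" unfolding rrel_def
      using vge_neg[OF dv, of 1 "x - y"] by simp
  qed
  moreover have "trans (rrel v)"
  proof (rule transI)
    fix x y z assume "(x, y) \<in> rrel v" "(y, z) \<in> rrel v"
    then show "(x, z) \<in> rrel v" unfolding rrel_def
      using vge_add[OF dv, of 1 "x - y" "y - z"] by simp
  qed
  moreover have "rrel v \<subseteq> int_ring v \<times> int_ring v" unfolding rrel_def by auto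
  ultimately show ?thesis unfolding equiv_def by blast
qed

lemma residue_field_rrel: "residue_field v = int_ring v // rrel v"
  unfolding residue_field_def rrel_def by simp

lemma reps_sub: "reps v \<subseteq> int_ring v"
proof
  fix r assume "r \<in> reps v"
  then obtain C where C: "C \<in> int_ring v // rrel v" "r = (SOME x. x \<in> C)"
    unfolding reps_def residue_field_rrel by auto
  then obtain x where x: "x \<in> int_ring v" "C = rrel v `` {x}" by (auto elim: quotientE)
  have "x \<in> C" using x equiv_class_self[OF rrel_equiv, of x] by simp
  then have "r \<in> C" using C(2) by (metis someI)
  then show "r \<in> int_ring v" using x unfolding rrel_def by auto
qed

lemma reps_cover: "x \<in> int_ring v \<Longrightarrow> \<exists>r\<in>reps v. vge v 1 (x - r)"
proof -
  assume x: "x \<in> int_ring v"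
  let ?C = "rrel v `` {x}"
  have C: "?C \<in> int_ring v // rrel v" using x by (rule quotientI)
  have "x \<in> ?C" using x equiv_class_self[OF rrel_equiv, of x] by simp
  then have "(SOME y. y \<in> ?C) \<in> ?C" by (metis someI)
  moreover have "(SOME y. y \<in> ?C) \<in> reps v" using C unfolding reps_def residue_field_rrel by (rule imageI)
  ultimately show ?thesis unfolding rrel_def by auto
qed

lemma reps_distinct: "r \<in> reps v \<Longrightarrow> r' \<in> reps v \<Longrightarrow> vge v 1 (r - r') \<Longrightarrow> r = r'"
proof -
  assume r: "r \<in> reps v" and r': "r' \<in> reps v" and h: "vge v 1 (r - r')"
  obtain C where C: "C \<in> int_ring v // rrel v" "r = (SOME x. x \<in> C)"
    using r unfolding reps_def residue_field_rrel by auto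
  obtain C' where C': "C' \<in> int_ring v // rrel v" "r' = (SOME x. x \<in> C')"
    using r' unfolding reps_def residue_field_rrel by auto
  have "C \<noteq> {}" "C' \<noteq> {}" using C(1) C'(1) rrel_equiv by (auto simp: in_quotient_imp_non_empty)
  then have rC: "r \<in> C" and rC': "r' \<in> C'" using C(2) C'(2) by (metis equals0I someI)+
  have "r \<in> int_ring v" "r' \<in> int_ring v" using r r' reps_sub by auto
  then have "(r, r') \<in> rrel v" using h unfolding rrel_def by auto
  then have "C = C'" using quotient_eqI[OF rrel_equiv C(1) C'(1) rC rC'] by simp
  then show ?thesis using C(2) C'(2) by simp
qed

lemma card_reps: "card (reps v) = residue_card v"
proof -
  have "inj_on (\<lambda>C. SOME x. x \<in> C) (residue_field v)"
  proof (rule inj_onI)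
    fix C C' assume C: "C \<in> residue_field v" and C': "C' \<in> residue_field v"
      and e: "(SOME x. x \<in> C) = (SOME x. x \<in> C')"
    have "C \<noteq> {}" "C' \<noteq> {}" using C C' rrel_equiv
      by (auto simp: in_quotient_imp_non_empty residue_field_rrel)
    then have "(SOME x. x \<in> C) \<in> C" "(SOME x. x \<in> C') \<in> C'" by (metis equals0I someI)+
    then have "C \<inter> C' \<noteq> {}" using e by auto
    then show "C = C'" using quotient_disj[OF rrel_equiv, of C C'] C C' unfolding residue_field_rrel
      by blast
  qed
  then show ?thesis unfolding reps_def residue_card_def by (simp add: card_image)
qed

end

locale tk =
  fixes v :: "'a::field \<Rightarrow> int" and \<pi> :: 'a and R :: "'a set"
  assumes dv: "discrete_valuation v"
    and pi0: "\<pi> \<noteq> 0" and vpi: "v \<pi> = 1"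
    and RO: "R \<subseteq> int_ring v"
    and Rcov: "\<And>x. x \<in> int_ring v \<Longrightarrow> \<exists>r\<in>R. vge v 1 (x - r)"
    and Rdist: "\<And>r r'. r \<in> R \<Longrightarrow> r' \<in> R \<Longrightarrow> vge v 1 (r - r') \<Longrightarrow> r = r'"
    and Rfin: "finite R"

context tk
begin

lemma vge_pi: "vge v n (\<pi>^k * y) = vge v (n - int k) y"
proof (cases "y = 0")
  case False
  have "\<pi>^k \<noteq> 0" using pi0 by simp
  then show ?thesis using False by (auto simp: vge_def vmult[OF dv] vpow[OF dv pi0] vpi)
qed (simp add: vge_def)

lemma Tk_int: "Tk \<pi> R k \<subseteq> int_ring v"
proof (induction k)
  case 0 then show ?case by (simp add: int_ring_def vge_def)
next
  case (Suc k)
  show ?case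
  proof
    fix z assume "z \<in> Tk \<pi> R (Suc k)"
    then obtain t r where z: "z = t + \<pi>^k * r" "t \<in> Tk \<pi> R k" "r \<in> R" by auto
    have "vge v 0 t" using z Suc by (auto simp: int_ring_def)
    moreover have "vge v 0 (\<pi>^k * r)" unfolding vge_pi
      using z RO by (auto simp: int_ring_def intro: vge_mono[OF dv])
    ultimately show "z \<in> int_ring v" using z vge_add[OF dv] by (auto simp: int_ring_def)
  qed
qed

lemma Tk_cover: "x \<in> int_ring v \<Longrightarrow> \<exists>t\<in>Tk \<pi> R k. vge v (int k) (x - t)"
proof (induction k)
  case 0 then show ?case by (simp add: int_ring_def)
next
  case (Suc k)
  then obtain t where t: "t \<in> Tk \<pi> R k" "vge v (int k) (x - t)" by blast
  define y where "y = (x - t) / \<pi>^k"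
  have xy: "x - t = \<pi>^k * y" using pi0 by (simp add: y_def)
  have "vge v 0 y" using t(2) unfolding xy vge_pi by simp
  then obtain r where r: "r \<in> R" "vge v 1 (y - r)" using Rcov by (auto simp: int_ring_def)
  have "x - (t + \<pi>^k * r) = \<pi>^k * (y - r)" using xy by (simp add: algebra_simps)
  then have "vge v (int (Suc k)) (x - (t + \<pi>^k * r))" using r(2) by (simp add: vge_pi)
  moreover have "t + \<pi>^k * r \<in> Tk \<pi> R (Suc k)" using t r by force
  ultimately show ?case by blast
qed

lemma Tk_dist: "t \<in> Tk \<pi> R k \<Longrightarrow> t' \<in> Tk \<pi> R k \<Longrightarrow> vge v (int k) (t - t') \<Longrightarrow> t = t'"
proof (induction k arbitrary: t t')
  case 0 then show ?case by simp
next
  case (Suc k)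
  obtain s r where s: "t = s + \<pi>^k * r" "s \<in> Tk \<pi> R k" "r \<in> R" using Suc.prems by auto
  obtain s' r' where s': "t' = s' + \<pi>^k * r'" "s' \<in> Tk \<pi> R k" "r' \<in> R" using Suc.prems by auto
  have rr: "vge v 0 (r - r')" using s s' RO vge_diff[OF dv, of 0 r r'] by (auto simp: int_ring_def)
  have d: "t - t' = (s - s') + \<pi>^k * (r - r')" using s s' by (simp add: algebra_simps)
  have "vge v (int k) (t - t')" using Suc.prems(3) vge_mono[OF dv] by simp
  moreover have "vge v (int k) (\<pi>^k * (r - r'))" using rr by (simp add: vge_pi)
  ultimately have "vge v (int k) (s - s')" using vge_diff[OF dv] d by fastforce
  then have ss: "s = s'" using Suc.IH s s' by blast
  then have "vge v (int (Suc k)) (\<pi>^k * (r - r'))" using d Suc.prems(3) by simp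
  then have "vge v 1 (r - r')" by (simp add: vge_pi)
  then have "r = r'" using Rdist s s' by blast
  then show ?case using ss s s' by simp
qed

lemma Tk_card: "finite (Tk \<pi> R k) \<and> card (Tk \<pi> R k) = card R ^ k"
proof (induction k)
  case 0 then show ?case by simp
next
  case (Suc k)
  have inj: "inj_on (\<lambda>(t,r). t + \<pi>^k * r) (Tk \<pi> R k \<times> R)"
  proof (rule inj_onI, clarify)
    fix s r s' r' assume s: "s \<in> Tk \<pi> R k" "r \<in> R" "s' \<in> Tk \<pi> R k" "r' \<in> R"
      and e: "s + \<pi>^k * r = s' + \<pi>^k * r'"
    have rr: "vge v 0 (r - r')" using s RO vge_diff[OF dv, of 0 r r'] by (auto simp: int_ring_def)
    have "s - s' = \<pi>^k * (r' - r)" using e by (simp add: algebra_simps)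
    moreover have "vge v (int k) (\<pi>^k * (r' - r))" using rr vge_neg[OF dv, of 0 "r - r'"] by (simp add: vge_pi)
    ultimately have "s = s'" using Tk_dist s by simp
    then show "s = s' \<and> r = r'" using e pi0 by simp
  qed
  then show ?case using Suc Rfin by (simp add: card_image card_cartesian_product)
qed

end

context
  fixes v :: "'a::field_char_0 \<Rightarrow> int" and p :: nat
  assumes pl: "padic_local_field v p"
begin

lemma dv: "discrete_valuation v" using pl by (simp add: padic_local_field_def)
lemma pp: "prime p" using pl by (simp add: padic_local_field_def)

lemma vp_ge1: "v (of_nat p) \<ge> 1"
proof -
  have "p \<noteq> 0" using pp by auto
  then show ?thesis using pl by (simp add: padic_local_field_def vge_def)
qed

lemma vge_scale: "c \<noteq> 0 \<Longrightarrow> vge v n (c * y) = vge v (n - v c) y"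
  by (cases "y = 0") (auto simp: vge_def vmult[OF dv])

lemma v_coprime: "\<not> int p dvd m \<Longrightarrow> v (of_int m) = 0"
proof -
  assume nd: "\<not> int p dvd m"
  have "prime (int p)" using pp by simp
  then have "coprime (int p) m" using nd by (simp add: prime_imp_coprime)
  then obtain s t where st: "s * int p + t * m = 1" using bezout_int[of "int p" m] by auto
  have m0: "m \<noteq> 0" using nd by auto
  have "vge v 0 (of_int m :: 'a)" by (rule vge_int[OF dv])
  then have ge: "v (of_int m :: 'a) \<ge> 0" using m0 by (simp add: vge_def)
  show ?thesis
  proof (rule ccontr)
    assume "v (of_int m :: 'a) \<noteq> 0"
    then have "vge v 1 (of_int m :: 'a)" using ge by (simp add: vge_def)
    then have "vge v 1 (of_int t * of_int m :: 'a)" using vge_mult[OF dv vge_int[OF dv]] by simp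
    moreover have "vge v 1 (of_int s * of_nat p :: 'a)" using vge_mult[OF dv vge_int[OF dv, of s], of 1 "of_nat p" 1] pl
      by (simp add: padic_local_field_def)
    ultimately have "vge v 1 (of_int s * of_nat p + of_int t * of_int m :: 'a)" using vge_add[OF dv] by blast
    also have "(of_int s * of_nat p + of_int t * of_int m :: 'a) = of_int (s * int p + t * m)" by simp
    finally show False using st by (simp add: vge_def v1[OF dv])
  qed
qed

lemma int_factor: "m \<noteq> 0 \<Longrightarrow> \<exists>j m'. m = int p ^ j * m' \<and> \<not> int p dvd m'"
proof (induction "nat \<bar>m\<bar>" arbitrary: m rule: less_induct)
  case less
  show ?case
  proof (cases "int p dvd m")
    case True
    then obtain m1 where m1: "m = int p * m1" by blast
    have p1: "int p > 1" using prime_gt_1_nat[OF pp] by simp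
    have "m1 \<noteq> 0" using m1 less.prems by auto
    then have "\<bar>m1\<bar> < \<bar>m\<bar>" using m1 p1 by (simp add: abs_mult)
    then obtain j m' where "m1 = int p ^ j * m'" "\<not> int p dvd m'" using less \<open>m1 \<noteq> 0\<close> by fastforce
    then show ?thesis using m1 by (metis mult.assoc power_Suc)
  next
    case False then show ?thesis by (metis mult_1 power_0)
  qed
qed

lemma v_int: "m \<noteq> 0 \<Longrightarrow> m = int p ^ j * m' \<Longrightarrow> \<not> int p dvd m' \<Longrightarrow>
   v (of_int m :: 'a) = int j * v (of_nat p)"
proof -
  assume m: "m \<noteq> 0" "m = int p ^ j * m'" "\<not> int p dvd m'"
  have "(of_int m :: 'a) = of_nat p ^ j * of_int m'" using m by simp
  moreover have "(of_nat p :: 'a) \<noteq> 0" using pp by auto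
  moreover have "(of_int m' :: 'a) \<noteq> 0" using m by auto
  ultimately show ?thesis using v_coprime[OF m(3)] by (simp add: vmult[OF dv] vpow[OF dv])
qed

lemma Zp_int: "x \<in> Zp_in v p \<Longrightarrow> vge v 0 x"
proof -
  assume "x \<in> Zp_in v p"
  then obtain m where hm: "vge v 0 (x - of_int m)" unfolding Zp_in_def by blast
  show ?thesis using vge_add[OF dv hm vge_int[OF dv, of m]] by simp
qed

lemma vp_main:
  assumes a: "a \<in> Zp_in v p" "a \<noteq> 0"
  shows "int (ram_index v p * vp v p a) = v a"
proof -
  let ?e = "v (of_nat p)"
  have p0: "(of_nat p :: 'a) \<noteq> 0" using pp by auto
  have approx: "\<exists>m3 j. vge v N (a - of_int m3) \<and> m3 = int p ^ j * (m3 div int p ^ j) \<and>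
        v a = int j * ?e" if "N > v a" for N
  proof -
    obtain m3 where m3: "vge v N (a - of_int m3)" using a unfolding Zp_in_def by blast
    then have "vge v (v a + 1) (of_int m3 - a)" using vge_mono[OF dv] that vge_neg[OF dv, of _ "a - of_int m3"]
      by fastforce
    then have "(of_int m3 :: 'a) \<noteq> 0 \<and> v (of_int m3) = v a" by (rule vge_strict[OF dv a(2)])
    then have m3': "(of_int m3 :: 'a) \<noteq> 0" "v (of_int m3) = v a" by blast+
    then have "m3 \<noteq> 0" by auto
    then obtain j m' where jm: "m3 = int p ^ j * m'" "\<not> int p dvd m'" using int_factor by blast
    have "v a = int j * ?e" using v_int[OF \<open>m3 \<noteq> 0\<close> jm] m3' by simp
    moreover have "m3 = int p ^ j * (m3 div int p ^ j)" using jm pp by auto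
    ultimately show ?thesis using m3 by blast
  qed
  obtain m0 j where j: "v a = int j * ?e" using approx[of "v a + 1"] by auto
  have e1: "?e \<ge> 1" by (rule vp_ge1)
  have inZ: "a / of_nat p ^ j \<in> Zp_in v p"
    unfolding Zp_in_def mem_Collect_eq
  proof (intro allI)
    fix n
    obtain m3 j' where h: "vge v (max (n + v a) (v a + 1)) (a - of_int m3)"
      "m3 = int p ^ j' * (m3 div int p ^ j')" "v a = int j' * ?e"
    proof -
      have "v a < max (n + v a) (v a + 1)" by simp
      from approx[OF this] show ?thesis using that by blast
    qed
    have "j' = j" using h(3) j e1 by simp
    define m' where "m' = m3 div int p ^ j"
    have "a - of_int m3 = of_nat p ^ j * (a / of_nat p ^ j - of_int m')"
      using h(2) \<open>j' = j\<close> p0 unfolding m'_def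
      by (metis (no_types, lifting) of_int_mult of_int_of_nat_eq of_int_power nonzero_mult_div_cancel_left
           power_not_zero right_diff_distrib times_divide_eq_right)
    then have "vge v (n + v a) (of_nat p ^ j * (a / of_nat p ^ j - of_int m'))"
      using h(1) vge_mono[OF dv] by (metis max.cobounded1)
    then have "vge v n (a / of_nat p ^ j - of_int m')"
      using p0 by (simp add: vge_scale vpow[OF dv] j)
    then show "\<exists>m::int. vge v n (a / of_nat p ^ j - of_int m)" by blast
  qed
  have le: "k \<le> j" if "a / of_nat p ^ k \<in> Zp_in v p" for k
  proof -
    have "vge v 0 (a / of_nat p ^ k)" using Zp_int that by blast
    moreover have "a / of_nat p ^ k \<noteq> 0" using a p0 by simp
    ultimately have "0 \<le> v a - int k * ?e" using p0 by (simp add: vge_def vdiv[OF dv] vpow[OF dv])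
    then have "int k * ?e \<le> int j * ?e" using j by simp
    then show "k \<le> j" using e1 by (simp add: mult_le_cancel_right)
  qed
  have "vp v p a = j" unfolding vp_def
    by (rule Greatest_equality[where P="\<lambda>k. a / of_nat p ^ k \<in> Zp_in v p", OF inZ le])
  then show ?thesis using j e1 by (simp add: ram_index_def)
qed

end

definition mk :: "'a::field \<Rightarrow> 'a \<Rightarrow> 'a \<Rightarrow> 'a \<Rightarrow> 'a^2^2" where
  "mk a b c d = (\<chi> i j. if i = 1 then (if j = 1 then a else b) else (if j = 1 then c else d))"

lemma two_ne_one: "(2::2) \<noteq> 1" by simp

lemma mk_nth[simp]: "mk a b c d $ 1 $ 1 = a" "mk a b c d $ 1 $ 2 = b"
  "mk a b c d $ 2 $ 1 = c" "mk a b c d $ 2 $ 2 = d"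
  by (simp_all add: mk_def two_ne_one)

lemma mk_eta: "A = mk (A$1$1) (A$1$2) (A$2$1) (A$2$2)"
  by (simp add: vec_eq_iff forall_2)

lemma mk_mult: "mk a b c d ** mk a' b' c' d' =
   mk (a*a'+b*c') (a*b'+b*d') (c*a'+d*c') (c*b'+d*d')"
  by (simp add: vec_eq_iff forall_2 matrix_matrix_mult_def sum_2)

lemma mk_det: "det (mk a b c d) = a * d - b * c"
  by (simp add: det_2)

lemma mk_eq: "mk a b c d = mk a' b' c' d' \<longleftrightarrow> a = a' \<and> b = b' \<and> c = c' \<and> d = d'"
  by (metis mk_nth)

lemma mk_one: "mat 1 = (mk 1 0 0 1 :: 'a::field^2^2)"
  by (simp add: vec_eq_iff forall_2 mat_def two_ne_one)

definition adj2 :: "'a::field^2^2 \<Rightarrow> 'a^2^2" where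
  "adj2 A = mk (A$2$2) (- A$1$2) (- A$2$1) (A$1$1)"

lemma mk_cases: obtains a b c d where "A = mk a b c d"
  using mk_eta by blast

lemma adj2_mk: "adj2 (mk a b c d) = mk d (-b) (-c) a"
  by (simp add: adj2_def)

lemma adj2_mult: "det A = 1 \<Longrightarrow> adj2 A ** A = mat 1"
  by (cases A rule: mk_cases) (simp add: adj2_mk mk_mult mk_one mk_det algebra_simps)

lemma mult_adj2: "det A = 1 \<Longrightarrow> A ** adj2 A = mat 1"
  by (cases A rule: mk_cases) (simp add: adj2_mk mk_mult mk_one mk_det algebra_simps)


context
  fixes v :: "'a::field \<Rightarrow> int"
  assumes dv: "discrete_valuation v"
begin

lemma K_mk: "mk a b c d \<in> SL2_int v \<longleftrightarrow> a * d - b * c = 1 \<and> vge v 0 a \<and> vge v 0 b \<and> vge v 0 c \<and> vge v 0 d"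
proof -
  have "(\<forall>i j. vge v 0 (mk a b c d $ i $ j)) \<longleftrightarrow> vge v 0 a \<and> vge v 0 b \<and> vge v 0 c \<and> vge v 0 d"
    by (simp add: forall_2)
  then show ?thesis by (simp add: SL2_int_def SL2_def mk_det)
qed

lemma K_mult: "k \<in> SL2_int v \<Longrightarrow> k' \<in> SL2_int v \<Longrightarrow> k ** k' \<in> SL2_int v"
proof (cases k rule: mk_cases, cases k' rule: mk_cases)
  fix a b c d a' b' c' d'
  assume h: "k \<in> SL2_int v" "k' \<in> SL2_int v" "k = mk a b c d" "k' = mk a' b' c' d'"
  have d: "det (k ** k') = 1" using h by (simp add: det_mul SL2_int_def SL2_def)
  have *: "vge v 0 (x * y + z * w)" if "vge v 0 x" "vge v 0 y" "vge v 0 z" "vge v 0 w" for x y z w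
    using that by (intro vge_add[OF dv] vge_mult[OF dv]) auto
  have e: "a * d - b * c = 1" "vge v 0 a" "vge v 0 b" "vge v 0 c" "vge v 0 d"
    "vge v 0 a'" "vge v 0 b'" "vge v 0 c'" "vge v 0 d'" using h by (simp_all add: K_mk)
  have d2: "det (mk (a*a'+b*c') (a*b'+b*d') (c*a'+d*c') (c*b'+d*d')) = 1" using d h by (simp add: mk_mult)
  show ?thesis unfolding h mk_mult K_mk using d2 e *
    by (simp add: mk_det)
qed

lemma K_adj: "k \<in> SL2_int v \<Longrightarrow> adj2 k \<in> SL2_int v"
  by (cases k rule: mk_cases) (auto simp: K_mk adj2_mk vge_neg[OF dv] algebra_simps)

lemma K_det: "k \<in> SL2_int v \<Longrightarrow> det k = 1"
  by (simp add: SL2_int_def SL2_def)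

end

context tk
begin

declare pi0[simp]

lemma vge_scale: "c \<noteq> 0 \<Longrightarrow> vge v n (c * y) = vge v (n - v c) y"
  by (cases "y = 0") (auto simp: vge_def vmult[OF dv])

lemma pipow0: "\<pi>^i \<noteq> 0" using pi0 by simp
lemma vpipow: "v (\<pi>^i) = int i" using vpow[OF dv pi0] vpi by simp

context
  fixes a :: 'a and m :: nat
  assumes a0: "a \<noteq> 0" and va: "v a = int m"
begin

definition g :: "nat \<Rightarrow> 'a \<Rightarrow> 'a^2^2" where
  "g i x = mk (\<pi>^i / a) x 0 (a / \<pi>^i)"

definition Gs :: "(nat \<times> 'a) set" where
  "Gs = Sigma {..m} (\<lambda>i. Tk \<pi> R (m - i))"

definition Cos :: "nat \<Rightarrow> 'a \<Rightarrow> ('a^2^2) set" where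
  "Cos i x = (\<lambda>y. y ** g i x) ` SL2_int v"

lemma det_g: "det (g i x) = 1"
  using a0 pi0 by (simp add: g_def mk_det)

lemma v_api: "v (a / \<pi>^i) = int m - int i" "a / \<pi>^i \<noteq> 0"
  using a0 pipow0 by (simp_all add: vdiv[OF dv] va vpipow)

lemma vge_api: "i \<le> m \<Longrightarrow> vge v 0 (a / \<pi>^i)"
  using v_api by (simp add: vge_def)

lemma cos_sub: "i \<le> m \<Longrightarrow> x \<in> Tk \<pi> R (m - i) \<Longrightarrow> Cos i x \<subseteq> S_F v a"
proof
  fix y assume i: "i \<le> m" and x: "x \<in> Tk \<pi> R (m - i)" and "y \<in> Cos i x"
  then obtain k where k: "k \<in> SL2_int v" "y = k ** g i x" unfolding Cos_def by auto
  obtain \<alpha> \<beta> \<gamma> \<delta> where kk: "k = mk \<alpha> \<beta> \<gamma> \<delta>" by (rule mk_cases)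
  have e: "vge v 0 \<alpha>" "vge v 0 \<beta>" "vge v 0 \<gamma>" "vge v 0 \<delta>" using k kk by (simp_all add: K_mk[OF dv])
  have xi: "vge v 0 x" using x Tk_int by (auto simp: int_ring_def)
  have det: "det y = 1" using k by (simp add: det_mul K_det[OF dv] det_g)
  have y: "y = mk (\<alpha> * (\<pi>^i / a)) (\<alpha> * x + \<beta> * (a / \<pi>^i)) (\<gamma> * (\<pi>^i / a)) (\<gamma> * x + \<delta> * (a / \<pi>^i))"
    using k kk by (simp add: g_def mk_mult)
  have "a * (\<alpha> * (\<pi>^i / a)) = \<pi>^i * \<alpha>" "a * (\<gamma> * (\<pi>^i / a)) = \<pi>^i * \<gamma>" using a0 by simp_all
  moreover have "vge v 0 (\<pi>^i * \<alpha>)" "vge v 0 (\<pi>^i * \<gamma>)" using e vge_pi vge_mono[OF dv] by auto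
  moreover have "vge v 0 (\<alpha> * x + \<beta> * (a / \<pi>^i))"
    by (rule vge_add[OF dv]; rule vge_mult[OF dv]) (use e xi vge_api[OF i] in auto)
  moreover have "vge v 0 (\<gamma> * x + \<delta> * (a / \<pi>^i))"
    by (rule vge_add[OF dv]; rule vge_mult[OF dv]) (use e xi vge_api[OF i] in auto)
  ultimately show "y \<in> S_F v a" using det unfolding S_F_def SL2_def y by simp
qed

lemma step2:
  assumes k1: "k1 \<in> SL2_int v" and A: "det A = 1" "vge v 0 (A$1$2)" "vge v 0 (A$2$2)"
    and e: "k1 ** A = mk (\<pi>^i / a) x0 0 y0"
  shows "\<exists>(i,x)\<in>Gs. A \<in> Cos i x"
proof -
  obtain \<alpha> \<beta> \<gamma> \<delta> where kk: "k1 = mk \<alpha> \<beta> \<gamma> \<delta>" by (rule mk_cases)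
  have ke: "vge v 0 \<alpha>" "vge v 0 \<beta>" "vge v 0 \<gamma>" "vge v 0 \<delta>" using k1 kk by (simp_all add: K_mk[OF dv])
  have Ae: "A = mk (A$1$1) (A$1$2) (A$2$1) (A$2$2)" by (rule mk_eta)
  have e2: "x0 = \<alpha> * A$1$2 + \<beta> * A$2$2" "y0 = \<gamma> * A$1$2 + \<delta> * A$2$2"
    using e kk by (subst (asm) Ae, simp add: mk_mult mk_eq)+
  have x0: "vge v 0 x0" "vge v 0 y0" unfolding e2 using ke A
    by (auto intro!: vge_add[OF dv] vge_mult[OF dv])
  have "det (k1 ** A) = 1" using k1 A by (simp add: det_mul K_det[OF dv])
  then have "(\<pi>^i / a) * y0 = 1" using e by (simp add: mk_det)
  then have y0: "y0 = a / \<pi>^i" using a0 pipow0 by (simp add: field_simps)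
  have im: "i \<le> m" using x0(2) v_api pi0 unfolding y0 by (simp add: vge_def)
  obtain t where t: "t \<in> Tk \<pi> R (m - i)" "vge v (int (m - i)) (x0 - t)"
    using Tk_cover[of x0 "m - i"] x0 by (auto simp: int_ring_def)
  define s where "s = (x0 - t) / y0"
  have xs: "x0 - t = y0 * s" using v_api(2)[of i] pi0 unfolding s_def y0 by simp
  have s: "vge v 0 s" using t(2) unfolding xs vge_scale[OF v_api(2)[of i, folded y0]]
    using y0 v_api im by simp
  define k2 where "k2 = mk 1 (-s) 0 1"
  have k2: "k2 \<in> SL2_int v" unfolding k2_def K_mk[OF dv] using s vge_neg[OF dv]
    by (simp add: vge_def v1[OF dv])
  define k where "k = k2 ** k1"
  have k: "k \<in> SL2_int v" unfolding k_def by (rule K_mult[OF dv k2 k1])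
  have xt: "x0 - s * y0 = t" using xs by (simp add: algebra_simps)
  have "k ** A = g i t" unfolding k_def
    by (simp add: matrix_mul_assoc[symmetric] e k2_def mk_mult g_def y0[symmetric] xt)
  then have "adj2 k ** (k ** A) = adj2 k ** g i t" by simp
  then have "A = adj2 k ** g i t"
    using adj2_mult[OF K_det[OF dv k]] by (simp add: matrix_mul_assoc)
  then have "A \<in> Cos i t" unfolding Cos_def using K_adj[OF dv k] by blast
  moreover have "(i, t) \<in> Gs" unfolding Gs_def using im t by auto
  ultimately show ?thesis by blast
qed

lemma mm_entry: "((B::'a^2^2) ** (A::'a^2^2))$i$j = B$i$1 * A$1$j + B$i$2 * A$2$j"
  by (simp add: matrix_matrix_mult_def sum_2)

lemma cover:
  assumes A: "A \<in> S_F v a"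
  shows "\<exists>(i,x)\<in>Gs. A \<in> Cos i x"
proof -
  have dA: "det A = 1" and i11: "vge v 0 (a * A$1$1)" and i12: "vge v 0 (A$1$2)"
    and i21: "vge v 0 (a * A$2$1)" and i22: "vge v 0 (A$2$2)"
    using A by (auto simp: S_F_def SL2_def)
  have dA': "A$1$1 * A$2$2 - A$1$2 * A$2$1 = 1" using dA by (simp add: det_2)
  define b11 where "b11 = a * A$1$1"
  define b21 where "b21 = a * A$2$1"
  have nz: "b11 \<noteq> 0 \<or> b21 \<noteq> 0" using dA' a0 unfolding b11_def b21_def by auto
  have b11i: "vge v 0 b11" and b21i: "vge v 0 b21" using i11 i21 by (simp_all add: b11_def b21_def)
  have fin: "A \<in> Cos i x" if "(i, x) \<in> Gs" "A \<in> Cos i x" for i x using that by blast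
  have key: "\<exists>(i,x)\<in>Gs. A \<in> Cos i x" if k1: "k1 \<in> SL2_int v" and e11: "(k1 ** A)$1$1 = \<pi>^i / a"
    and e21: "(k1 ** A)$2$1 = 0" for k1 i
  proof -
    have "k1 ** A = mk (\<pi>^i / a) ((k1 ** A)$1$2) 0 ((k1 ** A)$2$2)"
      using mk_eta[of "k1 ** A"] e11 e21 by simp
    then show ?thesis using step2[OF k1 dA i12 i22] by blast
  qed
  show ?thesis
  proof (cases "b11 \<noteq> 0 \<and> (b21 = 0 \<or> v b11 \<le> v b21)")
    case True
    then have b0: "b11 \<noteq> 0" by blast
    have vb: "v b11 \<ge> 0" using b11i b0 by (simp add: vge_def)
    define i where "i = nat (v b11)"
    have vi: "v (\<pi>^i) = v b11" using vb by (simp add: vpipow i_def)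
    define k1 where "k1 = mk (\<pi>^i / b11) 0 (- b21 / \<pi>^i) (b11 / \<pi>^i)"
    have A11: "A$1$1 \<noteq> 0" using b0 b11_def by auto
    have k1: "k1 \<in> SL2_int v" unfolding k1_def K_mk[OF dv]
    proof (intro conjI)
      show "\<pi> ^ i / b11 * (b11 / \<pi> ^ i) - 0 * (- b21 / \<pi> ^ i) = 1" using b0 pipow0 by simp
      show "vge v 0 (\<pi> ^ i / b11)" using b0 pipow0 vi by (simp add: vge_def vdiv[OF dv])
      show "vge v 0 (0::'a)" by (simp add: vge_def)
      show "vge v 0 (- b21 / \<pi> ^ i)" using True pipow0 vi
        by (cases "b21 = 0") (auto simp: vge_def vdiv[OF dv] vneg[OF dv])
      show "vge v 0 (b11 / \<pi> ^ i)" using b0 pipow0 vi by (simp add: vge_def vdiv[OF dv])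
    qed
    have "(k1 ** A)$1$1 = \<pi>^i / a" unfolding mm_entry k1_def using A11 a0 by (simp add: b11_def)
    moreover have "(k1 ** A)$2$1 = 0" unfolding mm_entry k1_def
      by (simp add: b11_def b21_def field_simps)
    ultimately show ?thesis using key[OF k1] by blast
  next
    case False
    then have b0: "b21 \<noteq> 0" and lt: "b11 = 0 \<or> v b21 < v b11" using nz by auto
    have vb: "v b21 \<ge> 0" using b21i b0 by (simp add: vge_def)
    define i where "i = nat (v b21)"
    have vi: "v (\<pi>^i) = v b21" using vb by (simp add: vpipow i_def)
    define k1 where "k1 = mk 0 (\<pi>^i / b21) (- b21 / \<pi>^i) (b11 / \<pi>^i)"
    have A21: "A$2$1 \<noteq> 0" using b0 b21_def by auto
    have k1: "k1 \<in> SL2_int v" unfolding k1_def K_mk[OF dv]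
    proof (intro conjI)
      show "0 * (b11 / \<pi> ^ i) - \<pi> ^ i / b21 * (- b21 / \<pi> ^ i) = 1" using b0 pipow0 by simp
      show "vge v 0 (\<pi> ^ i / b21)" using b0 pipow0 vi by (simp add: vge_def vdiv[OF dv])
      show "vge v 0 (0::'a)" by (simp add: vge_def)
      show "vge v 0 (- b21 / \<pi> ^ i)" using b0 pipow0 vi by (simp add: vge_def vdiv[OF dv] vneg[OF dv])
      show "vge v 0 (b11 / \<pi> ^ i)" using lt pipow0 vi
        by (cases "b11 = 0") (auto simp: vge_def vdiv[OF dv])
    qed
    have "(k1 ** A)$1$1 = \<pi>^i / a" unfolding mm_entry k1_def using A21 a0 by (simp add: b21_def)
    moreover have "(k1 ** A)$2$1 = 0" unfolding mm_entry k1_def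
      by (simp add: b11_def b21_def field_simps)
    ultimately show ?thesis using key[OF k1] by blast
  qed
qed

lemma disj:
  assumes "(i, x) \<in> Gs" "(i', x') \<in> Gs" "y \<in> Cos i x" "y \<in> Cos i' x'"
  shows "i = i' \<and> x = x'"
proof -
  obtain k where k: "k \<in> SL2_int v" "y = k ** g i x" using assms(3) unfolding Cos_def by auto
  obtain k' where k': "k' \<in> SL2_int v" "y = k' ** g i' x'" using assms(4) unfolding Cos_def by auto
  have im: "i \<le> m" "i' \<le> m" and x: "x \<in> Tk \<pi> R (m - i)" and x': "x' \<in> Tk \<pi> R (m - i')"
    using assms(1,2) unfolding Gs_def by auto
  define k2 where "k2 = adj2 k' ** k"
  have k2: "k2 \<in> SL2_int v" unfolding k2_def by (rule K_mult[OF dv K_adj[OF dv k'(1)] k(1)])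
  have "k2 ** g i x = g i' x'" unfolding k2_def
    using k k' adj2_mult[OF K_det[OF dv k'(1)]] by (metis matrix_mul_assoc matrix_mul_lid)
  then have "g i' x' ** adj2 (g i x) = k2"
    using mult_adj2[OF det_g] by (metis matrix_mul_assoc matrix_mul_rid)
  then have "mk ((\<pi>^i'/a)*(a/\<pi>^i)) ((\<pi>^i'/a)*(-x) + x' * (\<pi>^i/a)) 0 ((a/\<pi>^i')*(\<pi>^i/a)) \<in> SL2_int v"
    using k2 by (simp add: g_def adj2_mk mk_mult)
  then have e: "vge v 0 ((\<pi>^i'/a)*(a/\<pi>^i))" "vge v 0 ((\<pi>^i'/a)*(-x) + x' * (\<pi>^i/a))"
     "vge v 0 ((a/\<pi>^i')*(\<pi>^i/a))" by (simp_all add: K_mk[OF dv])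
  have eq: "(\<pi>^i'/a)*(a/\<pi>^i) = \<pi>^i' / \<pi>^i" "(a/\<pi>^i')*(\<pi>^i/a) = \<pi>^i / \<pi>^i'" using a0 by simp_all
  have f: "vge v 0 (\<pi>^i' / \<pi>^i)" "vge v 0 (\<pi>^i / \<pi>^i')" using e(1,3) unfolding eq by simp_all
  have "\<pi>^i' / \<pi>^i \<noteq> 0" "\<pi>^i / \<pi>^i' \<noteq> 0" using pipow0 by simp_all
  then have "v (\<pi>^i' / \<pi>^i) \<ge> 0" "v (\<pi>^i / \<pi>^i') \<ge> 0" using f by (simp_all add: vge_def)
  then have "i \<le> i'" "i' \<le> i" using pipow0 by (simp_all add: vdiv[OF dv] vpipow)
  then have ii: "i = i'" by simp
  have "(\<pi>^i'/a)*(-x) + x' * (\<pi>^i/a) = (x' - x) * (\<pi>^i/a)" using ii a0 by (simp add: field_simps)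
  then have e2: "vge v 0 ((x' - x) * (\<pi>^i/a))" using e(2) by simp
  have "x' - x = (a / \<pi>^i) * ((x' - x) * (\<pi>^i/a))" using a0 pipow0 by simp
  moreover have "vge v (int (m - i)) ((a / \<pi>^i) * ((x' - x) * (\<pi>^i/a)))"
  proof -
    have "vge v (int (m - i)) ((a / \<pi>^i) * ((x' - x) * (\<pi>^i/a))) =
      vge v (int (m - i) - v (a / \<pi>^i)) ((x' - x) * (\<pi>^i/a))" by (rule vge_scale[OF v_api(2)])
    also have "int (m - i) - v (a / \<pi>^i) = 0" using v_api(1) im by simp
    finally show ?thesis using e2 by simp
  qed
  ultimately have "vge v (int (m - i)) (x' - x)" by simp
  then have "x' = x" using Tk_dist x' x ii by blast
  then show ?thesis using ii by simp
qed

lemma Gs_fin: "finite Gs"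
  unfolding Gs_def using Tk_card by auto

lemma card_Gs: "card Gs = (\<Sum>i\<le>m. card R ^ (m - i))"
  unfolding Gs_def using Tk_card by (simp add: card_SigmaI)

lemma S_union: "S_F v a = (\<Union>p\<in>Gs. Cos (fst p) (snd p))"
proof
  show "S_F v a \<subseteq> (\<Union>p\<in>Gs. Cos (fst p) (snd p))" using cover by fastforce
  show "(\<Union>p\<in>Gs. Cos (fst p) (snd p)) \<subseteq> S_F v a" using cos_sub unfolding Gs_def by fastforce
qed

lemma measure_S:
  assumes M: "normalized_right_haar v M"
  shows "emeasure M (S_F v a) = of_nat (card Gs)"
proof -
  have K1: "emeasure M (SL2_int v) = 1" using M by (simp add: normalized_right_haar_def)
  then have K: "SL2_int v \<in> sets M" using emeasure_notin_sets by fastforce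
  have inv: "\<And>A g. A \<in> sets M \<Longrightarrow> g \<in> SL2 \<Longrightarrow> emeasure M ((\<lambda>x. x ** g) ` A) = emeasure M A"
    using M by (simp add: normalized_right_haar_def)
  have C1: "emeasure M (Cos i x) = 1" for i x
    unfolding Cos_def using inv[OF K, of "g i x"] det_g K1 by (simp add: SL2_def)
  then have Cs: "Cos i x \<in> sets M" for i x using emeasure_notin_sets by fastforce
  have "(\<Sum>p\<in>Gs. emeasure M (Cos (fst p) (snd p))) = emeasure M (\<Union>p\<in>Gs. Cos (fst p) (snd p))"
  proof (rule sum_emeasure)
    show "(\<lambda>p. Cos (fst p) (snd p)) ` Gs \<subseteq> sets M" using Cs by auto
    show "finite Gs" by (rule Gs_fin)
    show "disjoint_family_on (\<lambda>p. Cos (fst p) (snd p)) Gs"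
      unfolding disjoint_family_on_def using disj by fastforce
  qed
  then show ?thesis using C1 S_union by simp
qed

end
end

lemma geom_rev: "(\<Sum>i\<le>m. (q::nat) ^ (m - i)) = (\<Sum>i<Suc m. q ^ i)"
proof -
  have "(\<Sum>i\<le>m. q ^ (m - i)) = (\<Sum>i<Suc m. q ^ (Suc m - Suc i))"
    by (simp add: lessThan_Suc_atMost)
  also have "\<dots> = (\<Sum>i<Suc m. q ^ i)" by (rule sum.nat_diff_reindex)
  finally show ?thesis .
qed

theorem corollary2p4:
  fixes v :: "'a::field_char_0 \<Rightarrow> int" and p :: nat and M :: "('a ^ 2 ^ 2) measure"
    and a :: 'a
  assumes "padic_local_field v p"
    and "normalized_right_haar v M"
    and "a \<in> Zp_in v p" and "a \<noteq> 0"
  shows "emeasure M (S_F v a) =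
    ennreal ((1 - real (residue_card v) ^ (ram_index v p * vp v p a + 1))
             / (1 - real (residue_card v)))"
proof -
  have dv: "discrete_valuation v" using assms(1) by (simp add: padic_local_field_def)
  obtain \<pi> where pi: "\<pi> \<noteq> 0" "v \<pi> = 1" using dv unfolding discrete_valuation_def by blast
  have finR: "finite (reps v)" using assms(1) unfolding padic_local_field_def reps_def by simp
  interpret tk v \<pi> "reps v"
  proof
    show "discrete_valuation v" by (rule dv)
    show "\<pi> \<noteq> 0" "v \<pi> = 1" by (rule pi(1), rule pi(2))
    show "reps v \<subseteq> int_ring v" by (rule reps_sub[OF dv])
    show "\<And>x. x \<in> int_ring v \<Longrightarrow> \<exists>r\<in>reps v. vge v 1 (x - r)" by (rule reps_cover[OF dv])
    show "\<And>r r'. r \<in> reps v \<Longrightarrow> r' \<in> reps v \<Longrightarrow> vge v 1 (r - r') \<Longrightarrow> r = r'"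
      by (rule reps_distinct[OF dv])
    show "finite (reps v)" by (rule finR)
  qed
  define m where "m = ram_index v p * vp v p a"
  have va: "v a = int m" unfolding m_def using vp_main[OF assms(1) assms(3,4)] by simp
  define q where "q = residue_card v"
  have cR: "card (reps v) = q" unfolding q_def by (rule card_reps[OF dv])
  have q2: "q \<ge> 2"
  proof -
    have O0: "0 \<in> int_ring v" and O1: "1 \<in> int_ring v" by (simp_all add: int_ring_def vge_def v1[OF dv])
    obtain r0 where r0: "r0 \<in> reps v" "vge v 1 (0 - r0)" using reps_cover[OF dv O0] by blast
    obtain r1 where r1: "r1 \<in> reps v" "vge v 1 (1 - r1)" using reps_cover[OF dv O1] by blast
    have "r0 \<noteq> r1"
    proof
      assume "r0 = r1"
      then have "vge v 1 ((1 - r1) - (0 - r0))" using vge_diff[OF dv r1(2) r0(2)] by simp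
      then show False using \<open>r0 = r1\<close> by (simp add: vge_def v1[OF dv])
    qed
    then have "card {r0, r1} \<le> card (reps v)" using r0 r1 finR by (intro card_mono) auto
    then show ?thesis using \<open>r0 \<noteq> r1\<close> cR by simp
  qed
  have "emeasure M (S_F v a) = of_nat (card (Gs m))"
    by (rule measure_S[OF assms(4) va assms(2)])
  also have "card (Gs m) = (\<Sum>i<Suc m. q ^ i)"
    unfolding card_Gs[OF assms(4) va] cR by (rule geom_rev)
  also have "(of_nat (\<Sum>i<Suc m. q ^ i) :: ennreal) = ennreal (real (\<Sum>i<Suc m. q ^ i))"
    by (rule ennreal_of_nat_eq_real_of_nat)
  also have "real (\<Sum>i<Suc m. q ^ i) = (\<Sum>i<Suc m. real q ^ i)" by (simp only: of_nat_sum of_nat_power)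
  also have "\<dots> = (real q ^ Suc m - 1) / (real q - 1)" using q2 by (intro geometric_sum) auto
  also have "\<dots> = (1 - real q ^ (m + 1)) / (1 - real q)"
    by (metis minus_diff_eq minus_divide_divide Suc_eq_plus1)
  finally show ?thesis unfolding q_def m_def .
qed


end
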